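(* Let $\alpha\in\mathbb{N}$. For every $n\geq 2$, the $n$-point Gauss--Hermite quadrature $Q_n^{\mathrm{GH}}$ satisfies \[ e^{\mathrm{wor}}(Q_n^{\mathrm{GH}},\mathscr{H}_\alpha)\geq C_\alpha n^{-\alpha/2}, \] where $C_\alpha>0$ is a constant depending on $\alpha$ but independent of $n$.
   Context: Let $\rho(x)=\frac{1}{\sqrt{2\pi}}\mathrm{e}^{-x^2/2}$ and $L^2_\rho$ the space of (equivalence classes of) measurable $f:\mathbb{R}\to\mathbb{R}$ with $\|f\|_{L^2_\rho}^2=\int_\mathbb{R}|f(x)|^2\rho(x)\,\mathrm{d}x<\infty$. For $\alpha\in\mathbb{N}$, the weighted Sobolev space $\mathscr{H}_\alpha$ is the set of $f\in L^2_\rho$ having weak derivatives $f^{(\tau)}\in L^2_\rho$ for $\tau=1,\dots,\alpha$, with norm $\|f\|_\alpha=(\sum_{\tau=0}^\alpha\|f^{(\tau)}\|_{L^2_\rho}^2)^{1/2}$; elements are identified with their continuous representatives. Let $I(f)=\int_\mathbb{R}f(x)\rho(x)\,\mathrm{d}x$. For a quadrature rule $Q_n$, the worst-case error is $e^{\mathrm{wor}}(Q_n,\mathscr{H}_\alpha)=\sup_{0\neq f\in\mathscr{H}_\alpha}|I(f)-Q_n(f)|/\|f\|_\alpha$. The normalized probabilists' Hermite polynomial is $H_k(x)=\frac{(-1)^k}{\sqrt{k!}}\mathrm{e}^{x^2/2}\frac{\mathrm{d}^k}{\mathrm{d}x^k}\mathrm{e}^{-x^2/2}$. Gauss--Hermite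 quadrature is $Q_n^{\mathrm{GH}}(f)=\sum_{j=1}^n w_j f(\xi_j^{\mathrm{GH}})$, where $\xi_1^{\mathrm{GH}}<\dots<\xi_n^{\mathrm{GH}}$ are the zeros of $H_n$ and $w_j=1/[H_n'(\xi_j^{\mathrm{GH}})]^2$. *)

theory Defs
  imports "HOL-Analysis.Analysis"
begin

definition gauss_rho :: "real \<Rightarrow> real" where
  "gauss_rho x = exp (- (x ^ 2) / 2) / sqrt (2 * pi)"

definition test_function :: "(real \<Rightarrow> real) \<Rightarrow> bool" where
  "test_function \<phi> \<longleftrightarrow>
     (\<forall>k x. ((deriv ^^ k) \<phi>) differentiable (at x)) \<and>
     (\<exists>R. \<forall>x. R < \<bar>x\<bar> \<longrightarrow> \<phi> x = 0)"

definition weak_deriv :: "(real \<Rightarrow> real) \<Rightarrow> (real \<Rightarrow> real) \<Rightarrow> bool" where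
  "weak_deriv f g \<longleftrightarrow>
     (\<forall>\<phi>. test_function \<phi> \<longrightarrow>
        (LINT x|lborel. f x * deriv \<phi> x) = - (LINT x|lborel. g x * \<phi> x))"

definition in_L2rho :: "(real \<Rightarrow> real) \<Rightarrow> bool" where
  "in_L2rho f \<longleftrightarrow> f \<in> borel_measurable lborel \<and>
     integrable lborel (\<lambda>x. (f x)\<^sup>2 * gauss_rho x)"

definition L2rho_norm :: "(real \<Rightarrow> real) \<Rightarrow> real" where
  "L2rho_norm f = sqrt (LINT x|lborel. (f x)\<^sup>2 * gauss_rho x)"

definition sobolev_derivs :: "nat \<Rightarrow> (real \<Rightarrow> real) \<Rightarrow> (nat \<Rightarrow> real \<Rightarrow> real) \<Rightarrow> bool" where
  "sobolev_derivs \<alpha> f D \<longleftrightarrow> D 0 = f \<and>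
     (\<forall>\<tau>\<le>\<alpha>. in_L2rho (D \<tau>)) \<and>
     (\<forall>\<tau><\<alpha>. weak_deriv (D \<tau>) (D (Suc \<tau>)))"

definition sobolev_H :: "nat \<Rightarrow> ((real \<Rightarrow> real) \<times> (nat \<Rightarrow> real \<Rightarrow> real)) set" where
  "sobolev_H \<alpha> = {(f, D). continuous_on UNIV f \<and> sobolev_derivs \<alpha> f D}"

definition sobolev_norm :: "nat \<Rightarrow> (nat \<Rightarrow> real \<Rightarrow> real) \<Rightarrow> real" where
  "sobolev_norm \<alpha> D = sqrt (\<Sum>\<tau>\<le>\<alpha>. (L2rho_norm (D \<tau>))\<^sup>2)"

definition gauss_integral :: "(real \<Rightarrow> real) \<Rightarrow> real" where
  "gauss_integral f = (LINT x|lborel. f x * gauss_rho x)"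

definition hermite :: "nat \<Rightarrow> real \<Rightarrow> real" where
  "hermite k x = (-1) ^ k / sqrt (fact k) * exp (x ^ 2 / 2) *
                  (deriv ^^ k) (\<lambda>t. exp (- (t ^ 2) / 2)) x"

definition gauss_hermite :: "nat \<Rightarrow> (real \<Rightarrow> real) \<Rightarrow> real" where
  "gauss_hermite n f = (\<Sum>\<xi>\<in>{x. hermite n x = 0}. f \<xi> / (deriv (hermite n) \<xi>)\<^sup>2)"

definition worst_case_error :: "nat \<Rightarrow> ((real \<Rightarrow> real) \<Rightarrow> real) \<Rightarrow> ereal" where
  "worst_case_error \<alpha> Q =
     (SUP fD \<in> {(f, D) \<in> sobolev_H \<alpha>. f \<noteq> (\<lambda>_. 0)}.
        ereal (\<bar>gauss_integral (fst fD) - Q (fst fD)\<bar> / sobolev_norm \<alpha> (snd fD)))"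

end

theory Submission
  imports Defs "HOL-Computational_Algebra.Polynomial"
begin

fun hp :: "nat \<Rightarrow> real poly" where
  "hp 0 = 1"
| "hp (Suc k) = pCons 0 (hp k) - pderiv (hp k)"

lemmas hp_Suc = hp.simps(2)
declare hp.simps(2)[simp del]

lemma deriv_step:
  "((\<lambda>x. (-1) ^ k * poly p x * exp (- (x ^ 2) / 2)) has_real_derivative
        (-1) ^ Suc k * poly (pCons 0 p - pderiv p) x * exp (- (x ^ 2) / 2)) (at x)"
proof -
  have "((\<lambda>x. (-1) ^ k * poly p x * exp (- (x ^ 2) / 2)) has_real_derivative
        (-1) ^ k * poly (pderiv p) x * exp (- (x ^ 2) / 2) + (-1) ^ k * poly p x * (exp (- (x ^ 2) / 2) * (- x))) (at x)"
    by (rule derivative_eq_intros refl | simp)+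
  then show ?thesis by (simp add: algebra_simps)
qed
lemma deriv_iter_gauss:
  "(deriv ^^ k) (\<lambda>t. exp (- (t ^ 2) / 2)) = (\<lambda>x. (-1) ^ k * poly (hp k) x * exp (- (x ^ 2) / 2))"
proof (induction k)
  case 0
  then show ?case by simp
next
  case (Suc k)
  have *: "deriv (\<lambda>x. (-1) ^ k * poly (hp k) x * exp (- (x ^ 2) / 2)) x =
        (-1) ^ Suc k * poly (hp (Suc k)) x * exp (- (x ^ 2) / 2)" for x
    using deriv_step[of k "hp k" x] by (simp only: DERIV_imp_deriv hp_Suc)
  show ?case by (simp only: funpow.simps o_def Suc.IH) (rule ext, rule *)
qed

lemma hermite_eq: "hermite n x = poly (hp n) x / sqrt (fact n)"
proof -
  have "exp (x\<^sup>2 / 2) * exp (- x\<^sup>2 / 2) = 1" by (simp add: exp_minus)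
  moreover have "(-1::real) ^ n * (-1) ^ n = 1" by (simp flip: power_add mult_2)
  ultimately show ?thesis
    unfolding hermite_def deriv_iter_gauss
    by (simp add: field_simps)
qed


lemma pderiv_hp: "pderiv (hp (Suc k)) = smult (of_nat (Suc k)) (hp k)"
proof (induction k)
  case 0
  then show ?case by (simp add: pderiv_pCons hp_Suc)
next
  case (Suc k)
  have "pderiv (hp (Suc (Suc k))) = hp (Suc k) + pCons 0 (pderiv (hp (Suc k))) - pderiv (pderiv (hp (Suc k)))"
    by (simp only: hp_Suc[of "Suc k"] pderiv_diff pderiv_pCons)
  also have "\<dots> = hp (Suc k) + smult (of_nat (Suc k)) (pCons 0 (hp k) - pderiv (hp k))"
    by (simp only: Suc pderiv_smult smult_pCons smult_diff_right) (simp add: algebra_simps)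
  also have "\<dots> = hp (Suc k) + smult (of_nat (Suc k)) (hp (Suc k))"
    by (simp only: hp_Suc[symmetric])
  also have "\<dots> = smult (of_nat (Suc (Suc k))) (hp (Suc k))"
    by (metis of_nat_Suc smult_1_left smult_add_left add.commute)
  finally show ?case .
qed

lemma hp_ode: "pderiv (pderiv (hp n)) = pCons 0 (pderiv (hp n)) - smult (of_nat n) (hp n)"
proof (cases n)
  case 0
  then show ?thesis by simp
next
  case (Suc k)
  have "pderiv (pderiv (hp n)) = smult (of_nat n) (pderiv (hp k))"
    using Suc pderiv_hp[of k] by (simp add: pderiv_smult)
  also have "pderiv (hp k) = pCons 0 (hp k) - hp n" using Suc by (simp add: hp_Suc)
  finally show ?thesis using Suc by (simp add: pderiv_hp algebra_simps smult_diff_right smult_pCons)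
qed

lemma coeff_hp: "coeff (hp n) n = 1 \<and> degree (hp n) \<le> n"
proof (induction n)
  case 0 then show ?case by simp
next
  case (Suc n)
  have c: "coeff (pderiv (hp n)) (Suc n) = 0"
    using Suc by (simp add: coeff_pderiv coeff_eq_0)
  have "degree (pderiv (hp n)) \<le> Suc n"
    using Suc by (metis degree_pderiv diff_le_self le_SucI order_trans)
  moreover have "degree (pCons 0 (hp n)) \<le> Suc n"
    using Suc by (metis Suc_le_mono degree_pCons_le order_trans)
  ultimately have "degree (hp (Suc n)) \<le> Suc n"
    by (simp add: degree_diff_le hp_Suc)
  then show ?case using Suc c by (simp add: hp_Suc)
qed

lemma hp_nz: "hp n \<noteq> 0"
  using coeff_hp[of n] by auto

lemma deriv_eq_rule: "(f has_real_derivative a) F \<Longrightarrow> a = b \<Longrightarrow> (f has_real_derivative b) F"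
  by simp

definition V :: "nat \<Rightarrow> real poly" where
  "V n = pderiv (hp n) - smult (1/2) (pCons 0 (hp n))"

definition u :: "nat \<Rightarrow> real \<Rightarrow> real" where
  "u n x = poly (hp n) x * exp (- (x ^ 2) / 4)"

definition uu :: "nat \<Rightarrow> real \<Rightarrow> real" where
  "uu n x = poly (V n) x * exp (- (x ^ 2) / 4)"

definition qq :: "nat \<Rightarrow> real \<Rightarrow> real" where
  "qq n x = real n + 1/2 - x ^ 2 / 4"

definition EE :: "nat \<Rightarrow> real \<Rightarrow> real" where
  "EE n x = (uu n x)\<^sup>2 + qq n x * (u n x)\<^sup>2"

lemma u_deriv: "(u n has_real_derivative uu n x) (at x)"
proof -
  have "((\<lambda>x. poly (hp n) x * exp (- (x ^ 2) / 4)) has_real_derivative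
     poly (pderiv (hp n)) x * exp (- (x ^ 2) / 4) + poly (hp n) x * (exp (- (x ^ 2) / 4) * (- (2 * x) / 4))) (at x)"
    by (rule derivative_eq_intros refl | simp)+
  then show ?thesis unfolding u_def[abs_def] uu_def V_def by (simp add: algebra_simps)
qed

lemma V_deriv_eval: "poly (pderiv (V n)) x - x / 2 * poly (V n) x = - qq n x * poly (hp n) x"
proof -
  have o: "poly (pderiv (pderiv (hp n))) x = x * poly (pderiv (hp n)) x - real n * poly (hp n) x"
    by (simp add: hp_ode)
  show ?thesis unfolding V_def qq_def
    by (simp add: pderiv_diff pderiv_smult pderiv_pCons o algebra_simps power2_eq_square)
qed

lemma uu_deriv: "(uu n has_real_derivative (- qq n x * u n x)) (at x)"
proof -
  have "((\<lambda>x. poly (V n) x * exp (- (x ^ 2) / 4)) has_real_derivative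
     poly (pderiv (V n)) x * exp (- (x ^ 2) / 4) + poly (V n) x * (exp (- (x ^ 2) / 4) * (- (2 * x) / 4))) (at x)"
    by (rule derivative_eq_intros refl | simp)+
  moreover have "poly (pderiv (V n)) x * exp (- (x ^ 2) / 4) + poly (V n) x * (exp (- (x ^ 2) / 4) * (- (2 * x) / 4))
     = (poly (pderiv (V n)) x - x / 2 * poly (V n) x) * exp (- (x ^ 2) / 4)"
    by (simp add: algebra_simps)
  moreover have "(poly (pderiv (V n)) x - x / 2 * poly (V n) x) * exp (- (x ^ 2) / 4) = - qq n x * u n x"
    unfolding V_deriv_eval u_def by simp
  ultimately show ?thesis unfolding uu_def[abs_def] by (metis deriv_eq_rule)
qed

lemma qq_deriv: "(qq n has_real_derivative (- x / 2)) (at x within s)"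
  unfolding qq_def[abs_def] by (rule derivative_eq_intros refl | simp)+

lemma EE_deriv: "(EE n has_real_derivative (- x / 2 * (u n x)\<^sup>2)) (at x)"
proof -
  have "(EE n has_real_derivative (2 * uu n x * (- qq n x * u n x) + ((- (2 * x) / 4)  * (u n x)\<^sup>2 + qq n x * (2 * u n x * uu n x)))) (at x)"
    unfolding EE_def[abs_def]
    by (rule derivative_eq_intros u_deriv uu_deriv qq_deriv refl | simp)+
  then show ?thesis by (simp add: algebra_simps qq_def)
qed


lemma EE_le0: "EE n x \<le> EE n 0"
proof (cases "x \<ge> 0")
  case True
  show ?thesis
    by (rule DERIV_nonpos_imp_nonincreasing[OF True])
       (use EE_deriv in \<open>auto intro!: exI simp: mult_nonneg_nonneg\<close>)
next
  case False
  show ?thesis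
    by (rule DERIV_nonneg_imp_nondecreasing[of x 0]) (use False EE_deriv in \<open>auto intro!: exI simp: mult_nonpos_nonneg\<close>)
qed

lemma qq_ge: "\<bar>x\<bar> \<le> 1 \<Longrightarrow> qq n x \<ge> real n + 1/4"
proof -
  assume "\<bar>x\<bar> \<le> 1"
  then have "x^2 \<le> 1" by (simp add: abs_square_le_1)
  then show ?thesis unfolding qq_def by simp
qed

lemma u_sq_le: "\<bar>x\<bar> \<le> 1 \<Longrightarrow> (u n x)\<^sup>2 \<le> EE n 0 / (real n + 1/4)"
proof -
  assume x: "\<bar>x\<bar> \<le> 1"
  have "(real n + 1/4) * (u n x)\<^sup>2 \<le> qq n x * (u n x)\<^sup>2"
    using qq_ge[OF x] by (simp add: mult_right_mono)
  also have "\<dots> \<le> EE n x" unfolding EE_def by simp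
  also have "\<dots> \<le> EE n 0" by (rule EE_le0)
  finally show ?thesis by (simp add: field_simps)
qed

lemma uu_sq_le: "\<bar>x\<bar> \<le> 1 \<Longrightarrow> (uu n x)\<^sup>2 \<le> EE n 0"
proof -
  assume x: "\<bar>x\<bar> \<le> 1"
  have "0 \<le> qq n x * (u n x)\<^sup>2" using qq_ge[OF x, of n] by simp
  then have "(uu n x)\<^sup>2 \<le> EE n x" unfolding EE_def by simp
  also have "\<dots> \<le> EE n 0" by (rule EE_le0)
  finally show ?thesis .
qed

lemma EE0_nonneg: "0 \<le> EE n 0"
  using uu_sq_le[of 0 n] by (smt (verit) zero_le_power2)

lemma EE_lower: "\<bar>x\<bar> \<le> 1 \<Longrightarrow> EE n x \<ge> EE n 0 - EE n 0 / (2 * (real n + 1/4))"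
proof -
  assume x: "\<bar>x\<bar> \<le> 1"
  have key: "\<bar>(b - a) * (- z / 2 * (u n z)\<^sup>2)\<bar> \<le> EE n 0 / (2 * (real n + 1/4))"
    if "\<bar>b - a\<bar> \<le> 1" "\<bar>z\<bar> \<le> 1" for a b z
  proof -
    have "\<bar>(b - a) * (- z / 2 * (u n z)\<^sup>2)\<bar> = \<bar>b - a\<bar> * \<bar>z\<bar> * (u n z)\<^sup>2 / 2"
      by (simp add: abs_mult)
    also have "\<dots> \<le> 1 * 1 * (u n z)\<^sup>2 / 2"
      using that by (intro divide_right_mono mult_mono) auto
    also have "\<dots> \<le> EE n 0 / (real n + 1/4) / 2"
      using u_sq_le[OF that(2), of n] by (intro divide_right_mono) auto
    finally show ?thesis by (simp add: mult.commute)
  qed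
  consider "x = 0" | "0 < x" | "x < 0" by linarith
  then show ?thesis
  proof cases
    case 1
    then show ?thesis using EE0_nonneg[of n] by simp
  next
    case 2
    obtain z where z: "0 < z" "z < x" "EE n x - EE n 0 = (x - 0) * (- z / 2 * (u n z)\<^sup>2)"
      using MVT2[OF 2, of "EE n" "\<lambda>z. - z / 2 * (u n z)\<^sup>2"] EE_deriv by blast
    have "\<bar>EE n x - EE n 0\<bar> \<le> EE n 0 / (2 * (real n + 1/4))"
      unfolding z(3) by (rule key) (use x z in auto)
    then show ?thesis by linarith
  next
    case 3
    obtain z where z: "x < z" "z < 0" "EE n 0 - EE n x = (0 - x) * (- z / 2 * (u n z)\<^sup>2)"
      using MVT2[OF 3, of "EE n" "\<lambda>z. - z / 2 * (u n z)\<^sup>2"] EE_deriv by blast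
    have "\<bar>EE n 0 - EE n x\<bar> \<le> EE n 0 / (2 * (real n + 1/4))"
      unfolding z(3) by (rule key) (use x z in auto)
    then show ?thesis by linarith
  qed
qed

type_synonym form = "real poly \<times> real poly \<times> real poly"

definition qmul :: "nat \<Rightarrow> real poly \<Rightarrow> real poly" where
  "qmul n a = smult (real n + 1/2) a - smult (1/4) (pCons 0 (pCons 0 a))"

lemma poly_qmul: "poly (qmul n a) x = qq n x * poly a x"
  unfolding qmul_def qq_def by (simp add: algebra_simps power2_eq_square)

fun ev :: "nat \<Rightarrow> form \<Rightarrow> real \<Rightarrow> real" where
  "ev n (a0, a1, a2) x = poly a0 x * (u n x)\<^sup>2 + poly a1 x * (u n x * uu n x) + poly a2 x * (uu n x)\<^sup>2"

fun Dform :: "nat \<Rightarrow> form \<Rightarrow> form" where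
  "Dform n (a0, a1, a2) = (pderiv a0 - qmul n a1, pderiv a1 + smult 2 a0 - smult 2 (qmul n a2), pderiv a2 + a1)"

lemma ev_deriv: "(ev n A has_real_derivative ev n (Dform n A) x) (at x)"
proof -
  obtain a0 a1 a2 where A: "A = (a0, a1, a2)" by (cases A) auto
  have "((\<lambda>x. poly a0 x * (u n x)\<^sup>2 + poly a1 x * (u n x * uu n x) + poly a2 x * (uu n x)\<^sup>2) has_real_derivative
     (poly (pderiv a0) x * (u n x)\<^sup>2 + poly a0 x * (2 * u n x * uu n x)) +
     (poly (pderiv a1) x * (u n x * uu n x) + poly a1 x * (uu n x * uu n x + u n x * (- qq n x * u n x))) +
     (poly (pderiv a2) x * (uu n x)\<^sup>2 + poly a2 x * (2 * uu n x * (- qq n x * u n x)))) (at x)"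
    by (rule derivative_eq_intros u_deriv uu_deriv refl | simp)+
  moreover have "ev n (a0, a1, a2) = (\<lambda>x. poly a0 x * (u n x)\<^sup>2 + poly a1 x * (u n x * uu n x) + poly a2 x * (uu n x)\<^sup>2)"
    by (rule ext) simp
  ultimately show ?thesis unfolding A
    by (simp add: poly_qmul pderiv_add pderiv_diff algebra_simps power2_eq_square)
qed

definition gp :: "nat \<Rightarrow> real poly" where "gp k = [:1, 0, -1:] ^ k"

fun form :: "nat \<Rightarrow> nat \<Rightarrow> nat \<Rightarrow> form" where
  "form k n 0 = (gp k, 0, 0)"
| "form k n (Suc m) = Dform n (form k n m)"

definition P :: "nat \<Rightarrow> nat \<Rightarrow> nat \<Rightarrow> real \<Rightarrow> real" where
  "P k n m x = ev n (form k n m) x"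

lemma P_deriv: "(P k n m has_real_derivative P k n (Suc m) x) (at x)"
  unfolding P_def[abs_def] using ev_deriv by simp

lemma P_cont: "continuous_on S (P k n m)"
  using P_deriv by (meson DERIV_isCont continuous_at_imp_continuous_on)

definition pn :: "real poly \<Rightarrow> real" where
  "pn p = (\<Sum>i\<le>degree p. \<bar>coeff p i\<bar>)"

lemma pn_eq: "degree p \<le> M \<Longrightarrow> pn p = (\<Sum>i\<le>M. \<bar>coeff p i\<bar>)"
  unfolding pn_def
  by (rule sum.mono_neutral_left) (auto simp: coeff_eq_0)

lemma pn_nonneg: "0 \<le> pn p"
  unfolding pn_def by (simp add: sum_nonneg)

lemma pn_poly: "\<bar>x\<bar> \<le> 1 \<Longrightarrow> \<bar>poly p x\<bar> \<le> pn p"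
proof -
  assume x: "\<bar>x\<bar> \<le> 1"
  have "\<bar>poly p x\<bar> \<le> (\<Sum>i\<le>degree p. \<bar>coeff p i * x ^ i\<bar>)"
    unfolding poly_altdef by (rule sum_abs)
  also have "\<dots> \<le> (\<Sum>i\<le>degree p. \<bar>coeff p i\<bar>)"
  proof (rule sum_mono)
    fix i
    have "\<bar>x ^ i\<bar> \<le> 1" using x by (simp add: power_abs power_le_one)
    then show "\<bar>coeff p i * x ^ i\<bar> \<le> \<bar>coeff p i\<bar>"
      by (simp add: abs_mult mult_left_le)
  qed
  finally show ?thesis unfolding pn_def .
qed

lemma pn_add: "pn (p + q) \<le> pn p + pn q"
proof -
  define M where "M = max (degree p) (degree q)"
  have "pn (p + q) = (\<Sum>i\<le>M. \<bar>coeff p i + coeff q i\<bar>)"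
    by (subst pn_eq[of _ M]) (auto simp: M_def degree_add_le)
  also have "\<dots> \<le> (\<Sum>i\<le>M. \<bar>coeff p i\<bar> + \<bar>coeff q i\<bar>)"
    by (rule sum_mono) (rule abs_triangle_ineq)
  also have "\<dots> = pn p + pn q"
    by (simp add: sum.distrib pn_eq[of p M] pn_eq[of q M] M_def)
  finally show ?thesis .
qed

lemma pn_minus: "pn (- p) = pn p"
  unfolding pn_def by simp

lemma pn_diff: "pn (p - q) \<le> pn p + pn q"
  using pn_add[of p "- q"] by (simp add: pn_minus)

lemma pn_smult: "pn (smult c p) = \<bar>c\<bar> * pn p"
proof (cases "c = 0")
  case True then show ?thesis by (simp add: pn_def)
next
  case False then show ?thesis by (simp add: pn_def abs_mult sum_distrib_left)
qed

lemma pn_pCons0: "pn (pCons 0 p) = pn p"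
proof -
  have "pn (pCons 0 p) = (\<Sum>i\<le>Suc (degree p). \<bar>coeff (pCons 0 p) i\<bar>)"
    by (rule pn_eq) (rule degree_pCons_le)
  also have "\<dots> = (\<Sum>i\<le>degree p. \<bar>coeff p i\<bar>)"
    by (subst sum.atMost_Suc_shift) simp
  finally show ?thesis unfolding pn_def .
qed

lemma pn_pderiv: "pn (pderiv p) \<le> real (degree p) * pn p"
proof -
  define d where "d = degree p"
  have "pn (pderiv p) = (\<Sum>i\<le>d. \<bar>coeff (pderiv p) i\<bar>)"
    by (rule pn_eq) (simp add: d_def degree_pderiv)
  also have "\<dots> \<le> (\<Sum>i\<le>d. real d * \<bar>coeff p (Suc i)\<bar>)"
  proof (rule sum_mono)
    fix i assume "i \<in> {..d}"
    show "\<bar>coeff (pderiv p) i\<bar> \<le> real d * \<bar>coeff p (Suc i)\<bar>"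
    proof (cases "Suc i \<le> d")
      case True
      then show ?thesis by (simp add: coeff_pderiv abs_mult mult_right_mono)
    next
      case False
      then have "coeff p (Suc i) = 0" by (simp add: d_def coeff_eq_0)
      then show ?thesis by (simp add: coeff_pderiv)
    qed
  qed
  also have "\<dots> = real d * (\<Sum>i\<le>d. \<bar>coeff p (Suc i)\<bar>)"
    by (simp add: sum_distrib_left)
  also have "(\<Sum>i\<le>d. \<bar>coeff p (Suc i)\<bar>) \<le> (\<Sum>i\<le>Suc d. \<bar>coeff p i\<bar>)"
    by (subst sum.atMost_Suc_shift) simp
  also have "(\<Sum>i\<le>Suc d. \<bar>coeff p i\<bar>) = pn p"
    by (rule pn_eq[symmetric]) (simp add: d_def)
  finally show ?thesis by (simp add: d_def mult_left_mono)
qed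

lemma pn_qmul: "1 \<le> n \<Longrightarrow> pn (qmul n a) \<le> 2 * real n * pn a"
proof -
  assume n: "1 \<le> n"
  have "pn (qmul n a) \<le> pn (smult (real n + 1/2) a) + pn (smult (1/4) (pCons 0 (pCons 0 a)))"
    unfolding qmul_def by (rule pn_diff)
  also have "\<dots> = (real n + 1/2) * pn a + 1/4 * pn a"
    by (simp add: pn_smult pn_pCons0)
  also have "\<dots> \<le> 2 * real n * pn a"
  proof -
    have "1 \<le> real n" using n by simp
    then have h: "real n + 1/2 + 1/4 \<le> 2 * real n" by linarith
    have "(real n + 1/2 + 1/4) * pn a \<le> 2 * real n * pn a"
      by (rule mult_right_mono[OF h pn_nonneg])
    then show ?thesis by (simp add: algebra_simps)
  qed
  finally show ?thesis .
qed

lemma degree_qmul: "degree (qmul n a) \<le> degree a + 2"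
proof -
  have "degree (pCons 0 (pCons 0 a)) \<le> degree a + 2"
    by (metis add_2_eq_Suc' degree_pCons_le Suc_le_mono order_trans)
  moreover have "degree (smult (real n + 1/2) a) \<le> degree a + 2"
    using degree_smult_le[of "real n + 1/2" a] by linarith
  moreover have "degree (smult (1/4) (pCons 0 (pCons 0 a))) \<le> degree (pCons 0 (pCons 0 a))"
    by (rule degree_smult_le)
  ultimately show ?thesis unfolding qmul_def
    by (intro degree_diff_le) linarith+
qed

fun S :: "nat \<Rightarrow> form \<Rightarrow> real" where
  "S n (a0, a1, a2) = pn a0 / real n + pn a1 / sqrt (real n) + pn a2"

fun degs :: "form \<Rightarrow> nat \<Rightarrow> bool" where
  "degs (a0, a1, a2) d \<longleftrightarrow> degree a0 \<le> d \<and> degree a1 \<le> d \<and> degree a2 \<le> d"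

lemma S_nonneg: "0 \<le> S n A"
  by (cases A) (auto simp: pn_nonneg)

lemma degs_Dform: "degs A d \<Longrightarrow> degs (Dform n A) (d + 2)"
proof -
  assume h: "degs A d"
  obtain a0 a1 a2 where A: "A = (a0, a1, a2)" by (cases A) auto
  have d: "degree a0 \<le> d" "degree a1 \<le> d" "degree a2 \<le> d" using h A by auto
  have pd: "degree (pderiv a) \<le> d + 2" if "degree a \<le> d" for a :: "real poly"
    using that by (simp add: degree_pderiv)
  have qd: "degree (qmul n a) \<le> d + 2" if "degree a \<le> d" for a :: "real poly"
    using that degree_qmul[of n a] by linarith
  have sqd: "degree (smult c (qmul n a)) \<le> d + 2" if "degree a \<le> d" for a :: "real poly" and c
    using that degree_smult_le[of c "qmul n a"] degree_qmul[of n a] by linarith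
  have sd: "degree (smult c a) \<le> d + 2" if "degree a \<le> d" for a :: "real poly" and c
    using that degree_smult_le[of c a] by linarith
  have ad: "degree a \<le> d + 2" if "degree a \<le> d" for a :: "real poly" using that by linarith
  show ?thesis unfolding A Dform.simps degs.simps
    by (intro conjI degree_add_le degree_diff_le pd qd sqd sd ad d)
qed

lemma lin_aux:
  fixes p1 q1 p2 p3 q3 p4 r4 q4 p7 q7 A1 w :: real
  assumes "p1 \<le> q1" "p2 = 2 * A1" "p3 \<le> q3" "p4 = r4" "r4 \<le> q4" "p7 \<le> q7" "0 \<le> A1"
  shows "p1 + p2 + p3 + p4 + w + p7 + A1 \<le> q1 + q4 + q3 + 4 * A1 + q7 + w"
  using assms by linarith

lemma S_Dform:
  assumes n: "1 \<le> n" and h: "degs A d"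
  shows "S n (Dform n A) \<le> (real d + 4) * sqrt (real n) * S n A"
proof -
  obtain a0 a1 a2 where A: "A = (a0, a1, a2)" by (cases A) auto
  have d: "degree a0 \<le> d" "degree a1 \<le> d" "degree a2 \<le> d" using h A by auto
  define s where "s = sqrt (real n)"
  have s1: "1 \<le> s" using n by (simp add: s_def)
  have ns: "real n = s * s" using s_def by simp
  define A0 where "A0 = pn a0"
  define A1 where "A1 = pn a1"
  define A2 where "A2 = pn a2"
  have nn: "0 \<le> A0" "0 \<le> A1" "0 \<le> A2" by (auto simp: A0_def A1_def A2_def pn_nonneg)
  have pdb: "pn (pderiv a) \<le> real d * pn a" if "degree a \<le> d" for a :: "real poly"
    using pn_pderiv[of a] that pn_nonneg[of a]
    by (meson mult_right_mono of_nat_le_iff order_trans)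
  have b0: "pn (pderiv a0 - qmul n a1) \<le> real d * A0 + 2 * real n * A1"
    using pn_diff[of "pderiv a0" "qmul n a1"] pdb[OF d(1)] pn_qmul[OF n, of a1]
    unfolding A0_def A1_def by linarith
  have b1: "pn (pderiv a1 + smult 2 a0 - smult 2 (qmul n a2)) \<le> real d * A1 + 2 * A0 + 4 * real n * A2"
    using pn_diff[of "pderiv a1 + smult 2 a0" "smult 2 (qmul n a2)"] pn_add[of "pderiv a1" "smult 2 a0"]
      pdb[OF d(2)] pn_qmul[OF n, of a2] pn_smult[of 2 a0] pn_smult[of 2 "qmul n a2"]
    unfolding A0_def A1_def A2_def by linarith
  have b2: "pn (pderiv a2 + a1) \<le> real d * A2 + A1"
    using pn_add[of "pderiv a2" a1] pdb[OF d(3)] unfolding A1_def A2_def by linarith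
  have "S n (Dform n A) \<le> (real d * A0 + 2 * real n * A1) / real n
        + (real d * A1 + 2 * A0 + 4 * real n * A2) / s + (real d * A2 + A1)"
    unfolding A using b0 b1 b2 n s1 s_def
    by (auto intro!: add_mono divide_right_mono)
  also have "\<dots> = real d * A0 / (s * s) + 2 * s * A1 / s + real d * A1 / s + 2 * A0 / s + 4 * s * A2 + real d * A2 + A1"
    using s1 by (simp add: ns field_simps)
  also have "\<dots> \<le> (real d + 4) * s * (A0 / (s * s) + A1 / s + A2)"
  proof -
    have e1: "real d * A0 / (s * s) \<le> real d * s * A0 / (s * s)"
      using s1 nn by (intro divide_right_mono mult_right_mono) (auto simp: mult_le_cancel_left1)
    have e2: "real d * A1 / s \<le> real d * A1"
      using s1 mult_nonneg_nonneg[OF _ nn(2), of "real d"] by (simp add: divide_le_eq mult_le_cancel_left1)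
    have e3: "2 * A0 / s = 2 * s * A0 / (s * s)" using s1 by (simp add: field_simps)
    have e4: "real d * A2 \<le> real d * s * A2"
      using s1 nn by (simp add: mult_le_cancel_left1 mult_nonneg_nonneg mult_right_mono)
    have e5: "2 * s * A1 / s = 2 * A1" using s1 by simp
    have ex: "(real d + 4) * s * (A0 / (s * s) + A1 / s + A2) =
          real d * s * A0 / (s * s) + 4 * s * A0 / (s * s) + real d * A1 + 4 * A1 + real d * s * A2 + 4 * s * A2"
      using s1 by (simp add: field_simps)
    have e6: "2 * s * A0 / (s * s) \<le> 4 * s * A0 / (s * s)"
      using s1 nn by (intro divide_right_mono mult_right_mono) auto
    have "real d * A0 / (s * s) + 2 * s * A1 / s + real d * A1 / s + 2 * A0 / s + 4 * s * A2 + real d * A2 + A1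
        \<le> real d * s * A0 / (s * s) + 4 * s * A0 / (s * s) + real d * A1 + 4 * A1 + real d * s * A2 + 4 * s * A2"
      using lin_aux[OF e1 e5 e2 e3 e6 e4 nn(2), of "4 * s * A2"] by (simp only: ac_simps)
    then show ?thesis unfolding ex .
  qed
  also have "\<dots> = (real d + 4) * sqrt (real n) * S n A"
    unfolding A by (simp add: s_def A0_def A1_def A2_def)
  finally show ?thesis .
qed

lemma degs_form: "degs (form k n m) (2 * k + 2 * m)"
proof (induction m)
  case 0
  have "degree [:1, 0, -1::real:] = 2" by simp
  then have "degree (gp k) \<le> 2 * k"
    unfolding gp_def using degree_power_le[of "[:1, 0, -1::real:]" k] by simp
  then show ?case by simp
next
  case (Suc m)
  then show ?case using degs_Dform[OF Suc] by (simp add: algebra_simps)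
qed

definition K :: "nat \<Rightarrow> nat \<Rightarrow> real" where
  "K k m = (\<Prod>i<m. real (2 * k + 2 * i) + 4)"

lemma S_form: "1 \<le> n \<Longrightarrow> S n (form k n m) \<le> K k m * sqrt (real n) ^ m * S n (form k n 0)"
proof (induction m)
  case 0
  then show ?case by (simp add: K_def)
next
  case (Suc m)
  have "S n (form k n (Suc m)) \<le> (real (2 * k + 2 * m) + 4) * sqrt (real n) * S n (form k n m)"
    using S_Dform[OF Suc.prems degs_form] by simp
  also have "\<dots> \<le> (real (2 * k + 2 * m) + 4) * sqrt (real n) * (K k m * sqrt (real n) ^ m * S n (form k n 0))"
    using Suc by (intro mult_left_mono) auto
  also have "\<dots> = K k (Suc m) * sqrt (real n) ^ Suc m * S n (form k n 0)"
  proof -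
    have KS: "K k (Suc m) = K k m * (real (2 * k + 2 * m) + 4)" by (simp add: K_def)
    show ?thesis by (simp only: KS power_Suc mult_ac)
  qed
  finally show ?case .
qed

lemma ev_bound:
  assumes n: "1 \<le> n" and x: "\<bar>x\<bar> \<le> 1"
  shows "\<bar>ev n A x\<bar> \<le> EE n 0 * S n A"
proof -
  obtain a0 a1 a2 where A: "A = (a0, a1, a2)" by (cases A) auto
  define E0 where "E0 = EE n 0"
  have E0: "0 \<le> E0" using EE0_nonneg E0_def by simp
  have rn: "1 \<le> real n" using n by simp
  have u2: "(u n x)\<^sup>2 \<le> E0 / real n"
  proof -
    have "(u n x)\<^sup>2 \<le> E0 / (real n + 1/4)" using u_sq_le[OF x] E0_def by simp
    also have "\<dots> \<le> E0 / real n" using E0 rn by (intro divide_left_mono) auto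
    finally show ?thesis .
  qed
  have uu2: "(uu n x)\<^sup>2 \<le> E0" using uu_sq_le[OF x] E0_def by simp
  have uuu: "\<bar>u n x * uu n x\<bar> \<le> E0 / sqrt (real n)"
  proof (rule power2_le_imp_le)
    have "(\<bar>u n x * uu n x\<bar>)\<^sup>2 = (u n x)\<^sup>2 * (uu n x)\<^sup>2" by (simp add: power_mult_distrib)
    also have "\<dots> \<le> E0 / real n * E0" using u2 uu2 E0 by (intro mult_mono) auto
    also have "\<dots> = (E0 / sqrt (real n))\<^sup>2" using rn by (simp add: power_divide power2_eq_square)
    finally show "(\<bar>u n x * uu n x\<bar>)\<^sup>2 \<le> (E0 / sqrt (real n))\<^sup>2" .
    show "0 \<le> E0 / sqrt (real n)" using E0 by simp
  qed
  have t0: "\<bar>poly a0 x * (u n x)\<^sup>2\<bar> \<le> pn a0 * (E0 / real n)"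
    unfolding abs_mult using pn_poly[OF x, of a0] u2 by (intro mult_mono) (auto simp: pn_nonneg)
  have t1: "\<bar>poly a1 x * (u n x * uu n x)\<bar> \<le> pn a1 * (E0 / sqrt (real n))"
    unfolding abs_mult using pn_poly[OF x, of a1] uuu by (intro mult_mono) (auto simp: pn_nonneg)
  have t2: "\<bar>poly a2 x * (uu n x)\<^sup>2\<bar> \<le> pn a2 * E0"
    unfolding abs_mult using pn_poly[OF x, of a2] uu2 by (intro mult_mono) (auto simp: pn_nonneg)
  have "\<bar>ev n A x\<bar> \<le> pn a0 * (E0 / real n) + pn a1 * (E0 / sqrt (real n)) + pn a2 * E0"
    unfolding A using t0 t1 t2 by simp
  also have "\<dots> = E0 * S n A" unfolding A by (simp add: field_simps)
  finally show ?thesis unfolding E0_def .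
qed

definition rr :: "real poly" where "rr = [:1, 0, -1:]"

lemma dvd_pderiv_pow: "rr ^ Suc j dvd a \<Longrightarrow> rr ^ j dvd pderiv a"
proof -
  assume "rr ^ Suc j dvd a"
  then obtain b where b: "a = rr ^ Suc j * b" by (auto elim: dvdE)
  have "pderiv a = rr ^ Suc j * pderiv b + b * (smult (of_nat (Suc j)) (rr ^ j) * pderiv rr)"
    unfolding b pderiv_mult pderiv_power_Suc ..
  also have "\<dots> = rr ^ j * (rr * pderiv b + smult (of_nat (Suc j)) (b * pderiv rr))"
    by (simp add: algebra_simps)
  finally show ?thesis by simp
qed

lemma dvd_pCons0: "(c::real poly) dvd a \<Longrightarrow> c dvd pCons 0 a"
proof -
  assume "c dvd a"
  then obtain b where b: "a = c * b" by (auto elim: dvdE)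
  have e: "pCons 0 a = c * pCons 0 b" unfolding b by simp
  show ?thesis unfolding e by (rule dvd_triv_left)
qed

lemma dvd_qmul: "(c::real poly) dvd a \<Longrightarrow> c dvd qmul n a"
  unfolding qmul_def by (intro dvd_diff dvd_smult dvd_pCons0)

fun dvds :: "real poly \<Rightarrow> form \<Rightarrow> bool" where
  "dvds c (a0, a1, a2) \<longleftrightarrow> c dvd a0 \<and> c dvd a1 \<and> c dvd a2"

lemma dvds_form: "m \<le> k \<Longrightarrow> dvds (rr ^ (k - m)) (form k n m)"
proof (induction m)
  case 0
  then show ?case by (simp add: gp_def rr_def)
next
  case (Suc m)
  obtain a0 a1 a2 where A: "form k n m = (a0, a1, a2)" by (cases "form k n m") auto
  have kk: "k - m = Suc (k - Suc m)" using Suc.prems by simp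
  have h: "rr ^ Suc (k - Suc m) dvd a0" "rr ^ Suc (k - Suc m) dvd a1" "rr ^ Suc (k - Suc m) dvd a2"
    using Suc A kk by auto
  have h': "rr ^ (k - Suc m) dvd a0" "rr ^ (k - Suc m) dvd a1" "rr ^ (k - Suc m) dvd a2"
  proof -
    have "rr ^ (k - Suc m) dvd rr ^ Suc (k - Suc m)" by (simp add: le_imp_power_dvd)
    then show "rr ^ (k - Suc m) dvd a0" "rr ^ (k - Suc m) dvd a1" "rr ^ (k - Suc m) dvd a2"
      using h by (meson dvd_trans)+
  qed
  have p: "rr ^ (k - Suc m) dvd pderiv a0" "rr ^ (k - Suc m) dvd pderiv a1" "rr ^ (k - Suc m) dvd pderiv a2"
    using dvd_pderiv_pow h by blast+
  show ?case unfolding form.simps A Dform.simps dvds.simps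
    by (intro conjI dvd_diff dvd_add dvd_smult dvd_qmul p h')
qed

lemma P_pm1: "m < k \<Longrightarrow> x = 1 \<or> x = -1 \<Longrightarrow> P k n m x = 0"
proof -
  assume m: "m < k" and x: "x = 1 \<or> x = -1"
  obtain a0 a1 a2 where A: "form k n m = (a0, a1, a2)" by (cases "form k n m") auto
  have d: "dvds (rr ^ (k - m)) (form k n m)" using dvds_form m by simp
  have r: "rr dvd rr ^ (k - m)" using m by (simp add: dvd_power)
  have "poly rr x = 0" using x by (auto simp: rr_def)
  then have z: "poly a x = 0" if "rr dvd a" for a using that by (auto elim: dvdE)
  have "poly a0 x = 0" "poly a1 x = 0" "poly a2 x = 0"
    using d A r z by (auto intro: dvd_trans)
  then show ?thesis unfolding P_def A by simp
qed

lemma P_bound: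
  assumes "1 \<le> n" "\<bar>x\<bar> \<le> 1"
  shows "\<bar>P k n m x\<bar> \<le> EE n 0 * (K k m * sqrt (real n) ^ m * (pn (gp k) / real n))"
proof -
  have "\<bar>P k n m x\<bar> \<le> EE n 0 * S n (form k n m)"
    unfolding P_def by (rule ev_bound[OF assms])
  also have "\<dots> \<le> EE n 0 * (K k m * sqrt (real n) ^ m * S n (form k n 0))"
    by (intro mult_left_mono S_form assms EE0_nonneg)
  also have "S n (form k n 0) = pn (gp k) / real n" by (simp add: pn_def)
  finally show ?thesis .
qed

lemma ftc_real:
  fixes f f' :: "real \<Rightarrow> real"
  assumes "a \<le> b" "\<And>x. x \<in> {a..b} \<Longrightarrow> (f has_real_derivative f' x) (at x)"
  shows "(f' has_integral (f b - f a)) {a..b}"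
  using assms
  by (intro fundamental_theorem_of_calculus)
     (auto simp: has_real_derivative_iff_has_vector_derivative[symmetric] intro: has_field_derivative_at_within)

lemma cont_u [continuous_intros]: "continuous_on T (u n)"
  using u_deriv by (meson DERIV_isCont continuous_at_imp_continuous_on)
lemma cont_uu [continuous_intros]: "continuous_on T (uu n)"
  using uu_deriv by (meson DERIV_isCont continuous_at_imp_continuous_on)
lemma cont_EE [continuous_intros]: "continuous_on T (EE n)"
  using EE_deriv by (meson DERIV_isCont continuous_at_imp_continuous_on)
lemma cont_qq [continuous_intros]: "continuous_on T (qq n)"
  unfolding qq_def[abs_def] by (intro continuous_intros) auto

lemma qq_pos: "\<bar>x\<bar> \<le> 1 \<Longrightarrow> 0 < qq n x"
  using qq_ge[of x n] by linarith

lemma qq_nz: "-1 \<le> x \<Longrightarrow> x \<le> 1 \<Longrightarrow> qq n x \<noteq> 0"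
  using qq_pos[of x n] by (auto simp: abs_le_iff)

lemma poly_gp: "poly (gp k) x = (1 - x\<^sup>2) ^ k"
  unfolding gp_def by (simp add: power2_eq_square)

lemma u_uu_bound:
  assumes n: "1 \<le> n" and x: "\<bar>x\<bar> \<le> 1"
  shows "\<bar>u n x * uu n x\<bar> \<le> EE n 0 / sqrt (real n)"
proof -
  define E0 where "E0 = EE n 0"
  have E0: "0 \<le> E0" using EE0_nonneg E0_def by simp
  have rn: "1 \<le> real n" using n by simp
  have u2: "(u n x)\<^sup>2 \<le> E0 / real n"
  proof -
    have "(u n x)\<^sup>2 \<le> E0 / (real n + 1/4)" using u_sq_le[OF x] E0_def by simp
    also have "\<dots> \<le> E0 / real n" using E0 rn by (intro divide_left_mono) auto
    finally show ?thesis .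
  qed
  have uu2: "(uu n x)\<^sup>2 \<le> E0" using uu_sq_le[OF x] E0_def by simp
  show ?thesis unfolding E0_def[symmetric]
  proof (rule power2_le_imp_le)
    have "(\<bar>u n x * uu n x\<bar>)\<^sup>2 = (u n x)\<^sup>2 * (uu n x)\<^sup>2" by (simp add: power_mult_distrib)
    also have "\<dots> \<le> E0 / real n * E0" using u2 uu2 E0 by (intro mult_mono) auto
    also have "\<dots> = (E0 / sqrt (real n))\<^sup>2" using rn by (simp add: power_divide power2_eq_square)
    finally show "(\<bar>u n x * uu n x\<bar>)\<^sup>2 \<le> (E0 / sqrt (real n))\<^sup>2" .
    show "0 \<le> E0 / sqrt (real n)" using E0 by simp
  qed
qed

definition dgq :: "nat \<Rightarrow> nat \<Rightarrow> real \<Rightarrow> real" where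
  "dgq k n x = poly (pderiv (gp k)) x / qq n x + poly (gp k) x * x / (2 * (qq n x)\<^sup>2)"

lemma gp_pm1: "1 \<le> k \<Longrightarrow> poly (gp k) 1 = 0 \<and> poly (gp k) (-1) = 0"
  by (simp add: poly_gp)

lemma ibp_identity:
  assumes k: "1 \<le> k"
  shows "2 * integral {-1..1} (\<lambda>x. poly (gp k) x * (u n x)\<^sup>2) =
    integral {-1..1} (\<lambda>x. poly (gp k) x * EE n x / qq n x) + integral {-1..1} (\<lambda>x. dgq k n x * (u n x * uu n x))"
proof -
  define h where "h x = poly (gp k) x / qq n x * (u n x * uu n x)" for x
  define h' where "h' x = dgq k n x * (u n x * uu n x) + poly (gp k) x * EE n x / qq n x - 2 * (poly (gp k) x * (u n x)\<^sup>2)" for x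
  have d: "(h has_real_derivative h' x) (at x)" if x: "x \<in> {-1..1}" for x
  proof -
    have q: "qq n x \<noteq> 0" using qq_pos[of x n] x by (auto simp: abs_le_iff)
    have "(h has_real_derivative
       (poly (pderiv (gp k)) x * qq n x - poly (gp k) x * (- x / 2)) / (qq n x * qq n x) * (u n x * uu n x)
       + poly (gp k) x / qq n x * (uu n x * uu n x + u n x * (- qq n x * u n x))) (at x)"
      unfolding h_def[abs_def]
      by (rule derivative_eq_intros u_deriv uu_deriv qq_deriv refl | use q in simp)+
    moreover have "(poly (pderiv (gp k)) x * qq n x - poly (gp k) x * (- x / 2)) / (qq n x * qq n x) * (u n x * uu n x)
       + poly (gp k) x / qq n x * (uu n x * uu n x + u n x * (- qq n x * u n x)) = h' x"
      unfolding h'_def dgq_def EE_def using q by (simp add: field_simps power2_eq_square)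
    ultimately show ?thesis by (metis deriv_eq_rule)
  qed
  have "(h' has_integral (h 1 - h (-1))) {-1..1}"
    by (rule ftc_real) (use d in auto)
  moreover have "h 1 = 0" "h (-1) = 0" using gp_pm1[OF k] by (auto simp: h_def)
  ultimately have i0: "integral {-1..1} h' = 0" by (simp add: integral_unique)
  have c1: "continuous_on {-1..1} (\<lambda>x. dgq k n x * (u n x * uu n x))"
    unfolding dgq_def
    by (intro continuous_intros) (auto simp: qq_nz)
  have c2: "continuous_on {-1..1} (\<lambda>x. poly (gp k) x * EE n x / qq n x)"
    by (intro continuous_intros) (auto simp: qq_nz)
  have c3: "continuous_on {-1..1} (\<lambda>x. 2 * (poly (gp k) x * (u n x)\<^sup>2))"
    by (intro continuous_intros)
  have "integral {-1..1} h' = integral {-1..1} (\<lambda>x. dgq k n x * (u n x * uu n x)) +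
     integral {-1..1} (\<lambda>x. poly (gp k) x * EE n x / qq n x) - integral {-1..1} (\<lambda>x. 2 * (poly (gp k) x * (u n x)\<^sup>2))"
    unfolding h'_def[abs_def]
    using integrable_continuous_interval[OF c1] integrable_continuous_interval[OF c2] integrable_continuous_interval[OF c3]
    by (simp add: integral_add integral_diff integrable_add)
  then show ?thesis using i0 by simp
qed


lemma gp_bounds: "\<bar>x\<bar> \<le> 1 \<Longrightarrow> 0 \<le> poly (gp k) x \<and> poly (gp k) x \<le> 1"
proof -
  assume x: "\<bar>x\<bar> \<le> 1"
  have "x\<^sup>2 \<le> 1" using x by (simp add: abs_square_le_1)
  then have "0 \<le> 1 - x\<^sup>2" "1 - x\<^sup>2 \<le> 1" by auto
  then show ?thesis unfolding poly_gp by (simp add: power_le_one)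
qed

lemma dgq_bound:
  assumes n: "1 \<le> n" and x: "\<bar>x\<bar> \<le> 1"
  shows "\<bar>dgq k n x\<bar> \<le> (pn (pderiv (gp k)) + 1) / real n"
proof -
  define q where "q = qq n x"
  have q: "real n \<le> q" using qq_ge[OF x, of n] q_def by simp
  have rn: "1 \<le> real n" using n by simp
  have qp: "0 < q" using q rn by linarith
  have t1: "\<bar>poly (pderiv (gp k)) x / q\<bar> \<le> pn (pderiv (gp k)) / real n"
  proof -
    have "\<bar>poly (pderiv (gp k)) x / q\<bar> = \<bar>poly (pderiv (gp k)) x\<bar> / q" using qp by simp
    also have "\<dots> \<le> pn (pderiv (gp k)) / q" using pn_poly[OF x] qp by (intro divide_right_mono) auto
    also have "\<dots> \<le> pn (pderiv (gp k)) / real n" using q rn pn_nonneg by (intro divide_left_mono) auto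
    finally show ?thesis .
  qed
  have t2: "\<bar>poly (gp k) x * x / (2 * q\<^sup>2)\<bar> \<le> 1 / real n"
  proof -
    have "\<bar>poly (gp k) x * x\<bar> \<le> 1"
      using gp_bounds[OF x, of k] x by (simp add: abs_mult mult_le_one)
    moreover have "real n \<le> 2 * q\<^sup>2"
    proof -
      have "1 * real n \<le> q * q" by (rule mult_mono) (use q rn in auto)
      then show ?thesis by (simp add: power2_eq_square)
    qed
    ultimately have "\<bar>poly (gp k) x * x\<bar> / (2 * q\<^sup>2) \<le> 1 / real n"
      using rn by (intro frac_le) auto
    then show ?thesis using qp by (simp add: abs_mult)
  qed
  have "\<bar>dgq k n x\<bar> \<le> pn (pderiv (gp k)) / real n + 1 / real n"
    unfolding dgq_def q_def[symmetric] using t1 t2 by linarith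
  then show ?thesis by (simp add: add_divide_distrib)
qed

lemma lower_bound:
  assumes k: "1 \<le> k" and n: "1 \<le> n"
  and big: "16 * (pn (pderiv (gp k)) + 1) \<le> sqrt (real n) * integral {-1..1} (\<lambda>x. poly (gp k) x)"
  shows "EE n 0 * integral {-1..1} (\<lambda>x. poly (gp k) x) / (16 * real n) \<le> integral {-1..1} (\<lambda>x. poly (gp k) x * (u n x)\<^sup>2)"
proof -
  define G0 where "G0 = integral {-1..1} (\<lambda>x. poly (gp k) x)"
  define G1 where "G1 = pn (pderiv (gp k))"
  define E0 where "E0 = EE n 0"
  define s where "s = sqrt (real n)"
  have rn: "1 \<le> real n" using n by simp
  have s1: "1 \<le> s" using rn s_def by simp
  have E0: "0 \<le> E0" using EE0_nonneg E0_def by simp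
  have G1: "0 \<le> G1" using pn_nonneg G1_def by simp
  have cg: "continuous_on {-1..1} (\<lambda>x. poly (gp k) x)" by (intro continuous_intros)
  have A: "E0 / (4 * real n) * G0 \<le> integral {-1..1} (\<lambda>x. poly (gp k) x * EE n x / qq n x)"
  proof -
    have "integral {-1..1} (\<lambda>x. E0 / (4 * real n) * poly (gp k) x) \<le> integral {-1..1} (\<lambda>x. poly (gp k) x * EE n x / qq n x)"
    proof (rule integral_le)
      show "(\<lambda>x. E0 / (4 * real n) * poly (gp k) x) integrable_on {-1..1}"
        by (intro integrable_continuous_interval continuous_intros)
      show "(\<lambda>x. poly (gp k) x * EE n x / qq n x) integrable_on {-1..1}"
        by (intro integrable_continuous_interval continuous_intros) (auto simp: qq_nz)
      fix x :: real assume "x \<in> {-1..1}"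
      then have x: "\<bar>x\<bar> \<le> 1" by auto
      have g: "0 \<le> poly (gp k) x" using gp_bounds[OF x] by simp
      have qp: "0 < qq n x" using qq_pos[OF x] .
      have qu: "qq n x \<le> 2 * real n" unfolding qq_def using rn zero_le_power2[of x] by linarith
      have El: "E0 / 2 \<le> EE n x"
      proof -
        have "E0 / (2 * (real n + 1/4)) \<le> E0 / 2" using E0 rn by (intro divide_left_mono) auto
        moreover have "E0 - E0 / (2 * (real n + 1/4)) \<le> EE n x" using EE_lower[OF x, of n] by (simp add: E0_def)
        ultimately show ?thesis by linarith
      qed
      have "E0 / (4 * real n) \<le> EE n x / qq n x"
      proof -
        have "E0 / (4 * real n) = (E0 / 2) / (2 * real n)" by simp
        also have "\<dots> \<le> (E0 / 2) / qq n x" using E0 qp qu by (intro divide_left_mono) auto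
        also have "\<dots> \<le> EE n x / qq n x" using El qp by (intro divide_right_mono) auto
        finally show ?thesis .
      qed
      then have "E0 / (4 * real n) * poly (gp k) x \<le> EE n x / qq n x * poly (gp k) x"
        using g by (rule mult_right_mono)
      then show "E0 / (4 * real n) * poly (gp k) x \<le> poly (gp k) x * EE n x / qq n x" by (simp add: mult.commute)
    qed
    then show ?thesis unfolding G0_def by simp
  qed
  have B: "- (2 * ((G1 + 1) / real n * (E0 / s))) \<le> integral {-1..1} (\<lambda>x. dgq k n x * (u n x * uu n x))"
  proof -
    have "integral {-1..1} (\<lambda>x::real. - ((G1 + 1) / real n * (E0 / s))) \<le> integral {-1..1} (\<lambda>x. dgq k n x * (u n x * uu n x))"
    proof (rule integral_le[where f="\<lambda>x. - ((G1 + 1) / real n * (E0 / s))" and g="\<lambda>x. dgq k n x * (u n x * uu n x)"])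
      show "(\<lambda>x::real. - ((G1 + 1) / real n * (E0 / s))) integrable_on {-1..1}"
        by (rule integrable_const_ivl)
      show "(\<lambda>x. dgq k n x * (u n x * uu n x)) integrable_on {-1..1}"
        unfolding dgq_def by (intro integrable_continuous_interval continuous_intros) (auto simp: qq_nz)
      fix x :: real assume "x \<in> {-1..1}"
      then have x: "\<bar>x\<bar> \<le> 1" by auto
      have "\<bar>dgq k n x * (u n x * uu n x)\<bar> = \<bar>dgq k n x\<bar> * \<bar>u n x * uu n x\<bar>" by (rule abs_mult)
      also have "\<dots> \<le> (G1 + 1) / real n * (E0 / s)"
        unfolding G1_def E0_def s_def
        by (intro mult_mono dgq_bound u_uu_bound n x) (auto simp: pn_nonneg)
      finally have "\<bar>dgq k n x * (u n x * uu n x)\<bar> \<le> (G1 + 1) / real n * (E0 / s)" .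
      then show "- ((G1 + 1) / real n * (E0 / s)) \<le> dgq k n x * (u n x * uu n x)" by linarith
    qed
    moreover have "integral {-1..1} (\<lambda>x::real. - ((G1 + 1) / real n * (E0 / s))) = - (2 * ((G1 + 1) / real n * (E0 / s)))"
      by simp
    ultimately show ?thesis by linarith
  qed
  have big': "(G1 + 1) / s \<le> G0 / 16"
    using big s1 unfolding G0_def G1_def s_def by (simp add: divide_le_eq mult.commute)
  have "2 * ((G1 + 1) / real n * (E0 / s)) = 2 * E0 / real n * ((G1 + 1) / s)" by simp
  also have "\<dots> \<le> 2 * E0 / real n * (G0 / 16)" using big' E0 rn by (intro mult_left_mono) auto
  finally have C: "2 * ((G1 + 1) / real n * (E0 / s)) \<le> E0 * G0 / (8 * real n)" by simp
  have eq: "E0 / (4 * real n) * G0 = 2 * (E0 * G0 / (8 * real n))" by simp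
  have "2 * integral {-1..1} (\<lambda>x. poly (gp k) x * (u n x)\<^sup>2) \<ge> E0 * G0 / (8 * real n)"
    unfolding ibp_identity[OF k] using A B C eq by linarith
  then show ?thesis unfolding E0_def G0_def by simp
qed

lemma lint_ind:
  fixes h :: "real \<Rightarrow> real"
  assumes "continuous_on {-1..1} h"
  shows "integrable lborel (\<lambda>x. indicator {-1..1} x * h x)"
    "(LINT x|lborel. indicator {-1..1} x * h x) = integral {-1..1} h"
proof -
  have si: "set_integrable lborel {-1..1} h"
    by (rule borel_integrable_atLeastAtMost'[OF assms])
  then show "integrable lborel (\<lambda>x. indicator {-1..1} x * h x)"
    unfolding set_integrable_def by simp
  show "(LINT x|lborel. indicator {-1..1} x * h x) = integral {-1..1} h"
    using set_borel_integral_eq_integral(2)[OF si] unfolding set_lebesgue_integral_def by simp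
qed

definition DD :: "nat \<Rightarrow> nat \<Rightarrow> nat \<Rightarrow> real \<Rightarrow> real" where
  "DD k n m x = indicator {-1..1} x * P k n m x"

lemma cont_P [continuous_intros]: "continuous_on T (P k n m)"
  by (rule P_cont)

lemma cont_rho [continuous_intros]: "continuous_on T gauss_rho"
  unfolding gauss_rho_def[abs_def] by (intro continuous_intros) auto

lemma DD_L2: "in_L2rho (DD k n m)"
proof -
  have "integrable lborel (\<lambda>x. indicator {-1..1} x * P k n m x)"
    by (rule lint_ind) (intro continuous_intros)
  then have m: "DD k n m \<in> borel_measurable lborel"
    unfolding DD_def[abs_def] by (rule borel_measurable_integrable)
  have "integrable lborel (\<lambda>x. indicator {-1..1} x * ((P k n m x)\<^sup>2 * gauss_rho x))"
    by (rule lint_ind) (intro continuous_intros)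
  moreover have "(\<lambda>x. (DD k n m x)\<^sup>2 * gauss_rho x) = (\<lambda>x. indicator {-1..1} x * ((P k n m x)\<^sup>2 * gauss_rho x))"
    by (rule ext) (simp add: DD_def indicator_def)
  ultimately show ?thesis unfolding in_L2rho_def using m by simp
qed

lemma DD_norm2: "(L2rho_norm (DD k n m))\<^sup>2 = integral {-1..1} (\<lambda>x. (P k n m x)\<^sup>2 * gauss_rho x)"
proof -
  have "(\<lambda>x. (DD k n m x)\<^sup>2 * gauss_rho x) = (\<lambda>x. indicator {-1..1} x * ((P k n m x)\<^sup>2 * gauss_rho x))"
    by (rule ext) (simp add: DD_def indicator_def)
  then have e: "(LINT x|lborel. (DD k n m x)\<^sup>2 * gauss_rho x) = integral {-1..1} (\<lambda>x. (P k n m x)\<^sup>2 * gauss_rho x)"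
    using lint_ind(2)[of "\<lambda>x. (P k n m x)\<^sup>2 * gauss_rho x"] by (simp add: continuous_intros)
  have "0 \<le> integral {-1..1} (\<lambda>x. (P k n m x)\<^sup>2 * gauss_rho x)"
    by (intro integral_nonneg integrable_continuous_interval continuous_intros)
       (auto simp: gauss_rho_def)
  then show ?thesis unfolding L2rho_norm_def e by simp
qed

lemma DD_integral: "gauss_integral (DD k n 0) = integral {-1..1} (\<lambda>x. P k n 0 x * gauss_rho x)"
proof -
  have "(\<lambda>x. DD k n 0 x * gauss_rho x) = (\<lambda>x. indicator {-1..1} x * (P k n 0 x * gauss_rho x))"
    by (rule ext) (simp add: DD_def)
  then show ?thesis unfolding gauss_integral_def
    using lint_ind(2)[of "\<lambda>x. P k n 0 x * gauss_rho x"] by (simp add: continuous_intros)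
qed

lemma P0_eq: "P k n 0 x = poly (gp k) x * (u n x)\<^sup>2"
  by (simp add: P_def)

lemma DD_hermite: "gauss_hermite n (DD k n 0) = 0"
  unfolding gauss_hermite_def
proof (rule sum.neutral, rule ballI)
  fix \<xi> assume "\<xi> \<in> {x. hermite n x = 0}"
  then have "poly (hp n) \<xi> = 0" by (simp add: hermite_eq)
  then have "P k n 0 \<xi> = 0" by (simp add: P0_eq u_def)
  then show "DD k n 0 \<xi> / (deriv (hermite n) \<xi>)\<^sup>2 = 0" by (simp add: DD_def)
qed

lemma DD_cont: "1 \<le> k \<Longrightarrow> continuous_on UNIV (DD k n 0)"
proof -
  assume k: "1 \<le> k"
  have "DD k n 0 x = P k n 0 (max (-1) (min 1 x))" for x
  proof (cases "x \<in> {-1..1}")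
    case True then show ?thesis by (simp add: DD_def)
  next
    case False
    then have "max (-1) (min 1 x) = 1 \<or> max (-1) (min 1 x) = -1" by auto
    then have "P k n 0 (max (-1) (min 1 x)) = 0" using P_pm1[of 0 k] k by auto
    then show ?thesis using False by (simp add: DD_def)
  qed
  then have e: "DD k n 0 = (\<lambda>x. P k n 0 (max (-1) (min 1 x)))" by (rule ext)
  show ?thesis unfolding e
    by (rule continuous_on_compose2[OF P_cont[of UNIV]]) (auto intro!: continuous_intros)
qed


lemma DD_weak:
  assumes m: "Suc m < k"
  shows "weak_deriv (DD k n m) (DD k n (Suc m))"
  unfolding weak_deriv_def
proof (intro allI impI)
  fix \<phi> assume "test_function \<phi>"
  then have diff: "\<And>j x. (deriv ^^ j) \<phi> differentiable (at x)" unfolding test_function_def by blast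
  have d\<phi>: "(\<phi> has_real_derivative deriv \<phi> x) (at x)" for x
    using diff[of 0 x] by (simp add: DERIV_deriv_iff_real_differentiable)
  have c\<phi>: "continuous_on T \<phi>" for T
    using d\<phi> by (meson DERIV_isCont continuous_at_imp_continuous_on)
  have cd\<phi>: "continuous_on T (deriv \<phi>)" for T
    using diff[of 1] by (simp add: differentiable_imp_continuous_within continuous_at_imp_continuous_on)
  have e1: "(LINT x|lborel. DD k n m x * deriv \<phi> x) = integral {-1..1} (\<lambda>x. P k n m x * deriv \<phi> x)"
  proof -
    have "(\<lambda>x. DD k n m x * deriv \<phi> x) = (\<lambda>x. indicator {-1..1} x * (P k n m x * deriv \<phi> x))"
      by (rule ext) (simp add: DD_def)
    then show ?thesis using lint_ind(2)[of "\<lambda>x. P k n m x * deriv \<phi> x"] cd\<phi>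
      by (simp add: continuous_intros)
  qed
  have e2: "(LINT x|lborel. DD k n (Suc m) x * \<phi> x) = integral {-1..1} (\<lambda>x. P k n (Suc m) x * \<phi> x)"
  proof -
    have "(\<lambda>x. DD k n (Suc m) x * \<phi> x) = (\<lambda>x. indicator {-1..1} x * (P k n (Suc m) x * \<phi> x))"
      by (rule ext) (simp add: DD_def)
    then show ?thesis using lint_ind(2)[of "\<lambda>x. P k n (Suc m) x * \<phi> x"] c\<phi>
      by (simp add: continuous_intros)
  qed
  have "((\<lambda>x. P k n (Suc m) x * \<phi> x + P k n m x * deriv \<phi> x) has_integral
      (P k n m 1 * \<phi> 1 - P k n m (-1) * \<phi> (-1))) {-1..1}"
  proof (rule ftc_real)
    fix x :: real
    show "((\<lambda>x. P k n m x * \<phi> x) has_real_derivative P k n (Suc m) x * \<phi> x + P k n m x * deriv \<phi> x) (at x)"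
      by (rule derivative_eq_intros P_deriv d\<phi> refl | simp)+
  qed simp
  moreover have "P k n m 1 = 0" "P k n m (-1) = 0" using P_pm1[of m k] m by auto
  ultimately have "integral {-1..1} (\<lambda>x. P k n (Suc m) x * \<phi> x + P k n m x * deriv \<phi> x) = 0"
    by (simp add: integral_unique)
  moreover have "integral {-1..1} (\<lambda>x. P k n (Suc m) x * \<phi> x + P k n m x * deriv \<phi> x) =
      integral {-1..1} (\<lambda>x. P k n (Suc m) x * \<phi> x) + integral {-1..1} (\<lambda>x. P k n m x * deriv \<phi> x)"
    by (intro integral_add integrable_continuous_interval continuous_intros c\<phi> cd\<phi>)
  ultimately show "(LINT x|lborel. DD k n m x * deriv \<phi> x) = - (LINT x|lborel. DD k n (Suc m) x * \<phi> x)"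
    unfolding e1 e2 by linarith
qed

lemma exists_nonroot: "\<exists>x0. \<bar>x0\<bar> \<le> 1/2 \<and> poly (hp n) x0 \<noteq> 0"
proof (rule ccontr)
  assume "\<not> ?thesis"
  then have "{-1/2..1/2::real} \<subseteq> {x. poly (hp n) x = 0}" by auto
  moreover have "finite {x. poly (hp n) x = 0}" by (rule poly_roots_finite[OF hp_nz])
  ultimately have "finite {-1/2..1/2::real}" by (rule finite_subset)
  then show False using infinite_Icc[of "-1/2" "1/2::real"] by simp
qed

lemma int_pos:
  fixes f :: "real \<Rightarrow> real"
  assumes c: "continuous_on {-1..1} f" and nn: "\<And>x. x \<in> {-1..1} \<Longrightarrow> 0 \<le> f x"
    and x0: "x0 \<in> {-1..1}" "0 < f x0"
  shows "0 < integral {-1..1} f"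
proof -
  have "0 \<le> integral {-1..1} f"
    using nn by (intro integral_nonneg integrable_continuous_interval c) auto
  moreover have "integral {-1..1} f \<noteq> 0"
    using integral_eq_0_iff[OF c _ nn] x0 by force
  ultimately show ?thesis by linarith
qed

lemma rho_pos: "0 < gauss_rho x"
  by (simp add: gauss_rho_def)

lemma rho_le1: "gauss_rho x \<le> 1"
proof -
  have "exp (- x\<^sup>2 / 2) \<le> 1" by simp
  moreover have "1 \<le> sqrt (2 * pi)" using pi_gt3 by simp
  ultimately have "exp (- x\<^sup>2 / 2) / sqrt (2 * pi) \<le> exp (- x\<^sup>2 / 2) / 1"
    by (intro divide_left_mono) auto
  also have "\<dots> \<le> 1" by simp
  finally show ?thesis unfolding gauss_rho_def .
qed

lemma rho_ge: "\<bar>x\<bar> \<le> 1 \<Longrightarrow> gauss_rho 1 \<le> gauss_rho x"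
proof -
  assume "\<bar>x\<bar> \<le> 1"
  then have "x\<^sup>2 \<le> 1" by (simp add: abs_square_le_1)
  then show ?thesis unfolding gauss_rho_def by (intro divide_right_mono) auto
qed

lemma K_pos: "0 < K k m"
  unfolding K_def by (intro prod_pos) auto

lemma K_mono: "m \<le> m' \<Longrightarrow> K k m \<le> K k m'"
proof (induction m' rule: dec_induct)
  case base then show ?case by simp
next
  case (step j)
  have "K k j \<le> K k j * (real (2 * k + 2 * j) + 4)"
    using K_pos[of k j] by (simp add: mult_le_cancel_left1)
  also have "\<dots> = K k (Suc j)" by (simp add: K_def)
  finally show ?case using step by linarith
qed

lemma P0_pos_pt:
  assumes "\<bar>x0\<bar> \<le> 1/2" "poly (hp n) x0 \<noteq> 0"
  shows "0 < P k n 0 x0"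
proof -
  have "x0\<^sup>2 \<le> 1/4"
  proof -
    have "\<bar>x0\<bar>\<^sup>2 \<le> (1/2)\<^sup>2" using power_mono[OF assms(1), of 2] by simp
    then show ?thesis by (simp add: power2_eq_square)
  qed
  then have "0 < poly (gp k) x0" unfolding poly_gp by simp
  moreover have "u n x0 \<noteq> 0" using assms(2) by (simp add: u_def)
  ultimately show ?thesis by (simp add: P0_eq)
qed

definition Iv :: "nat \<Rightarrow> nat \<Rightarrow> real" where
  "Iv a n = integral {-1..1} (\<lambda>x. P (Suc a) n 0 x * gauss_rho x)"

definition N2 :: "nat \<Rightarrow> nat \<Rightarrow> real" where
  "N2 a n = (\<Sum>\<tau>\<le>a. integral {-1..1} (\<lambda>x. (P (Suc a) n \<tau> x)\<^sup>2 * gauss_rho x))"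

lemma norm_eq: "sobolev_norm a (DD (Suc a) n) = sqrt (N2 a n)"
  unfolding sobolev_norm_def N2_def DD_norm2 ..

lemma P0_nonneg: "\<bar>x\<bar> \<le> 1 \<Longrightarrow> 0 \<le> P k n 0 x"
  unfolding P0_eq using gp_bounds[of x k] by simp

lemma Iv_pos: "0 < Iv a n"
proof -
  obtain x0 where x0: "\<bar>x0\<bar> \<le> 1/2" "poly (hp n) x0 \<noteq> 0" using exists_nonroot by blast
  show ?thesis unfolding Iv_def
  proof (rule int_pos[of _ x0])
    show "continuous_on {-1..1} (\<lambda>x. P (Suc a) n 0 x * gauss_rho x)" by (intro continuous_intros)
    show "0 \<le> P (Suc a) n 0 x * gauss_rho x" if "x \<in> {-1..1}" for x
      using that P0_nonneg[of x] rho_pos[of x] by (simp add: abs_le_iff)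
    show "x0 \<in> {-1..1}" using x0 by auto
    show "0 < P (Suc a) n 0 x0 * gauss_rho x0" using P0_pos_pt[OF x0] rho_pos by simp
  qed
qed

lemma N2_pos: "0 < N2 a n"
proof -
  obtain x0 where x0: "\<bar>x0\<bar> \<le> 1/2" "poly (hp n) x0 \<noteq> 0" using exists_nonroot by blast
  have nn: "0 \<le> integral {-1..1} (\<lambda>x. (P (Suc a) n \<tau> x)\<^sup>2 * gauss_rho x)" for \<tau>
    by (intro integral_nonneg integrable_continuous_interval continuous_intros)
       (auto simp: less_imp_le[OF rho_pos])
  have "0 < integral {-1..1} (\<lambda>x. (P (Suc a) n 0 x)\<^sup>2 * gauss_rho x)"
  proof (rule int_pos[of _ x0])
    show "continuous_on {-1..1} (\<lambda>x. (P (Suc a) n 0 x)\<^sup>2 * gauss_rho x)" by (intro continuous_intros)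
    show "0 \<le> (P (Suc a) n 0 x)\<^sup>2 * gauss_rho x" if "x \<in> {-1..1}" for x
      using rho_pos[of x] by simp
    show "x0 \<in> {-1..1}" using x0 by auto
    show "0 < (P (Suc a) n 0 x0)\<^sup>2 * gauss_rho x0" using P0_pos_pt[OF x0, of "Suc a"] rho_pos[of x0] by simp
  qed
  also have "\<dots> \<le> N2 a n" unfolding N2_def
    by (rule member_le_sum) (auto simp: nn)
  finally show ?thesis .
qed

lemma mem:
  "(DD (Suc a) n 0, DD (Suc a) n) \<in> {(f, D) \<in> sobolev_H a. f \<noteq> (\<lambda>_. 0)}"
proof -
  obtain x0 where x0: "\<bar>x0\<bar> \<le> 1/2" "poly (hp n) x0 \<noteq> 0" using exists_nonroot by blast
  have "x0 \<in> {-1..1}" using x0 by (auto simp: abs_le_iff)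
  then have "DD (Suc a) n 0 x0 \<noteq> 0"
    using P0_pos_pt[OF x0, of "Suc a"] by (simp add: DD_def)
  then have nz: "DD (Suc a) n 0 \<noteq> (\<lambda>_. 0)" by metis
  have "sobolev_derivs a (DD (Suc a) n 0) (DD (Suc a) n)"
    unfolding sobolev_derivs_def using DD_L2 DD_weak by auto
  then show ?thesis using nz DD_cont[of "Suc a" n] unfolding sobolev_H_def by auto
qed

lemma wce_ge: "ereal (Iv a n / sqrt (N2 a n)) \<le> worst_case_error a (gauss_hermite n)"
proof -
  have "ereal (Iv a n / sqrt (N2 a n)) =
    (\<lambda>fD. ereal (\<bar>gauss_integral (fst fD) - gauss_hermite n (fst fD)\<bar> / sobolev_norm a (snd fD)))
      (DD (Suc a) n 0, DD (Suc a) n)"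
    using Iv_pos[of a n] by (simp add: DD_hermite DD_integral norm_eq Iv_def)
  also have "\<dots> \<le> worst_case_error a (gauss_hermite n)"
    unfolding worst_case_error_def by (rule SUP_upper[OF mem])
  finally show ?thesis .
qed


definition G0 :: "nat \<Rightarrow> real" where
  "G0 a = integral {-1..1} (\<lambda>x. poly (gp (Suc a)) x)"

definition G1 :: "nat \<Rightarrow> real" where
  "G1 a = pn (pderiv (gp (Suc a)))"

definition cc :: "nat \<Rightarrow> real" where
  "cc a = gauss_rho 1 * G0 a / (16 * (sqrt (2 * (real a + 1)) * (K (Suc a) a * pn (gp (Suc a)))))"

lemma G0_pos: "0 < G0 a"
  unfolding G0_def
proof (rule int_pos[of _ 0])
  show "continuous_on {-1..1} (poly (gp (Suc a)))" by (intro continuous_intros)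
  show "0 \<le> poly (gp (Suc a)) x" if "x \<in> {-1..1}" for x
    using gp_bounds[of x] that by (auto simp: abs_le_iff)
qed (auto simp: poly_gp)

lemma pn_gp_pos: "1 \<le> pn (gp k)"
  using pn_poly[of 0 "gp k"] by (simp add: poly_gp)

lemma cc_pos: "0 < cc a"
  unfolding cc_def using G0_pos[of a] rho_pos[of 1] K_pos[of "Suc a" a] pn_gp_pos[of "Suc a"]
  by (intro divide_pos_pos mult_pos_pos) auto

lemma big_bound:
  assumes n: "1 \<le> n" and big: "16 * (G1 a + 1) \<le> sqrt (real n) * G0 a"
  shows "cc a / sqrt (real n) ^ a \<le> Iv a n / sqrt (N2 a n)"
proof -
  define k where "k = Suc a"
  define E0 where "E0 = EE n 0"
  define s where "s = sqrt (real n)"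
  define Q where "Q = pn (gp k)"
  define KK where "KK = K k a"
  define B where "B = E0 * (KK * s ^ a * (Q / real n))"
  have rn: "1 \<le> real n" using n by simp
  have s1: "1 \<le> s" using rn s_def by simp
  have E0: "0 \<le> E0" using EE0_nonneg E0_def by simp
  have Q: "1 \<le> Q" using pn_gp_pos Q_def by simp
  have KK: "0 < KK" using K_pos KK_def by simp
  have L: "gauss_rho 1 * (E0 * G0 a / (16 * real n)) \<le> Iv a n"
  proof -
    have "E0 * G0 a / (16 * real n) \<le> integral {-1..1} (\<lambda>x. poly (gp k) x * (u n x)\<^sup>2)"
      using lower_bound[of k n] big n unfolding E0_def G0_def G1_def k_def by (simp add: mult.commute)
    then have "gauss_rho 1 * (E0 * G0 a / (16 * real n)) \<le> gauss_rho 1 * integral {-1..1} (\<lambda>x. poly (gp k) x * (u n x)\<^sup>2)"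
      using rho_pos[of 1] by (intro mult_left_mono) auto
    also have "\<dots> = integral {-1..1} (\<lambda>x. gauss_rho 1 * (poly (gp k) x * (u n x)\<^sup>2))" by simp
    also have "\<dots> \<le> Iv a n" unfolding Iv_def k_def[symmetric]
    proof (rule integral_le)
      show "(\<lambda>x. gauss_rho 1 * (poly (gp k) x * (u n x)\<^sup>2)) integrable_on {-1..1}"
        by (intro integrable_continuous_interval continuous_intros)
      show "(\<lambda>x. P k n 0 x * gauss_rho x) integrable_on {-1..1}"
        by (intro integrable_continuous_interval continuous_intros)
      fix x :: real assume "x \<in> {-1..1}"
      then have x: "\<bar>x\<bar> \<le> 1" by auto
      have "0 \<le> poly (gp k) x * (u n x)\<^sup>2" using gp_bounds[OF x, of k] by simp
      then have "gauss_rho 1 * (poly (gp k) x * (u n x)\<^sup>2) \<le> gauss_rho x * (poly (gp k) x * (u n x)\<^sup>2)"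
        using rho_ge[OF x] by (intro mult_right_mono) auto
      then show "gauss_rho 1 * (poly (gp k) x * (u n x)\<^sup>2) \<le> P k n 0 x * gauss_rho x"
        by (simp add: P0_eq mult.commute)
    qed
    finally show ?thesis .
  qed
  have U: "N2 a n \<le> real (Suc a) * (2 * B\<^sup>2)"
  proof -
    have "N2 a n \<le> real (card {..a}) * (2 * B\<^sup>2)" unfolding N2_def
    proof (rule sum_bounded_above)
      fix \<tau> assume "\<tau> \<in> {..a}"
      then have ta: "\<tau> \<le> a" by simp
      have "integral {-1..1} (\<lambda>x. (P (Suc a) n \<tau> x)\<^sup>2 * gauss_rho x) \<le> integral {-1..1} (\<lambda>x::real. B\<^sup>2)"
      proof (rule integral_le)
        show "(\<lambda>x. (P (Suc a) n \<tau> x)\<^sup>2 * gauss_rho x) integrable_on {-1..1}"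
          by (intro integrable_continuous_interval continuous_intros)
        show "(\<lambda>x::real. B\<^sup>2) integrable_on {-1..1}" by (rule integrable_const_ivl)
        fix x :: real assume "x \<in> {-1..1}"
        then have x: "\<bar>x\<bar> \<le> 1" by auto
        have "\<bar>P k n \<tau> x\<bar> \<le> E0 * (K k \<tau> * s ^ \<tau> * (Q / real n))"
          using P_bound[OF n x, of k \<tau>] unfolding E0_def s_def Q_def .
        also have "\<dots> \<le> B" unfolding B_def KK_def
          using E0 K_mono[OF ta, of k] K_pos[of k \<tau>] s1 ta Q rn
          by (intro mult_left_mono mult_right_mono mult_mono power_increasing) auto
        finally have pb: "\<bar>P k n \<tau> x\<bar> \<le> B" .
        have "(P k n \<tau> x)\<^sup>2 \<le> B\<^sup>2"
          using pb by (metis abs_le_square_iff abs_of_nonneg abs_ge_zero order_trans power2_abs)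
        then have "(P k n \<tau> x)\<^sup>2 * gauss_rho x \<le> B\<^sup>2 * 1"
          using rho_le1[of x] rho_pos[of x] by (intro mult_mono) auto
        then show "(P (Suc a) n \<tau> x)\<^sup>2 * gauss_rho x \<le> B\<^sup>2" by (simp add: k_def)
      qed
      also have "\<dots> = 2 * B\<^sup>2" by simp
      finally show "integral {-1..1} (\<lambda>x. (P (Suc a) n \<tau> x)\<^sup>2 * gauss_rho x) \<le> 2 * B\<^sup>2" .
    qed
    then show ?thesis by simp
  qed
  have E0p: "0 < E0"
  proof (rule ccontr)
    assume "\<not> 0 < E0"
    then have "E0 = 0" using E0 by simp
    then have "N2 a n \<le> 0" using U by (simp add: B_def)
    then show False using N2_pos[of a n] by simp
  qed
  have Bp: "0 < B" unfolding B_def using E0p KK Q s1 rn by (intro mult_pos_pos divide_pos_pos) auto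
  have sU: "sqrt (N2 a n) \<le> sqrt (2 * (real a + 1)) * B"
  proof -
    have "sqrt (N2 a n) \<le> sqrt (real (Suc a) * (2 * B\<^sup>2))" using U by simp
    also have "real (Suc a) * (2 * B\<^sup>2) = 2 * (real a + 1) * B\<^sup>2" by simp
    also have "sqrt (2 * (real a + 1) * B\<^sup>2) = sqrt (2 * (real a + 1)) * B" using Bp
      by (simp only: real_sqrt_mult real_sqrt_abs)
    finally show ?thesis .
  qed
  have "gauss_rho 1 * (E0 * G0 a / (16 * real n)) / (sqrt (2 * (real a + 1)) * B) \<le> Iv a n / sqrt (N2 a n)"
    using L sU Iv_pos[of a n] N2_pos[of a n] by (intro frac_le) auto
  moreover have "gauss_rho 1 * (E0 * G0 a / (16 * real n)) / (sqrt (2 * (real a + 1)) * B) = cc a / s ^ a"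
    unfolding B_def cc_def KK_def Q_def k_def using E0p rn s1 KK Q
    by (simp add: field_simps)
  ultimately show ?thesis by (simp add: s_def)
qed

lemma powr_eq: "1 \<le> n \<Longrightarrow> real n powr (- real a / 2) = 1 / sqrt (real n) ^ a"
proof -
  assume n: "1 \<le> n"
  then have rn: "0 < real n" by simp
  have "sqrt (real n) ^ a = (real n powr (1/2)) ^ a" using rn by (simp add: powr_half_sqrt)
  also have "\<dots> = real n powr (real a * (1/2))" using rn by (simp add: powr_power)
  finally have e: "sqrt (real n) ^ a = real n powr (real a / 2)" by simp
  have "real n powr (- real a / 2) = real n powr (- (real a / 2))" by simp
  also have "\<dots> = 1 / real n powr (real a / 2)" by (rule powr_minus_divide)
  finally show ?thesis using e by simp
qed

theorem theorem3p2:
  fixes \<alpha> :: nat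
  assumes "1 \<le> \<alpha>"
  shows "\<exists>C > 0. \<forall>n \<ge> 2.
           worst_case_error \<alpha> (gauss_hermite n) \<ge> ereal (C * real n powr (- real \<alpha> / 2))"
proof -
  define r where "r n = Iv \<alpha> n / sqrt (N2 \<alpha> n)" for n
  have rpos: "0 < r n" for n unfolding r_def using Iv_pos N2_pos by simp
  define N0 where "N0 = nat \<lceil>(16 * (G1 \<alpha> + 1) / G0 \<alpha>)\<^sup>2\<rceil>"
  have bigN: "16 * (G1 \<alpha> + 1) \<le> sqrt (real n) * G0 \<alpha>" if "N0 \<le> n" for n
  proof -
    have "(16 * (G1 \<alpha> + 1) / G0 \<alpha>)\<^sup>2 \<le> real N0" unfolding N0_def by linarith
    also have "\<dots> \<le> real n" using that by simp
    finally have "sqrt ((16 * (G1 \<alpha> + 1) / G0 \<alpha>)\<^sup>2) \<le> sqrt (real n)" by (rule real_sqrt_le_mono)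
    then have "\<bar>16 * (G1 \<alpha> + 1) / G0 \<alpha>\<bar> \<le> sqrt (real n)" by (simp only: real_sqrt_abs)
    then have "16 * (G1 \<alpha> + 1) / G0 \<alpha> \<le> sqrt (real n)" by (meson abs_ge_self order_trans)
    then show ?thesis using G0_pos[of \<alpha>] by (simp add: divide_le_eq)
  qed
  define A where "A = insert (cc \<alpha>) ((\<lambda>n. r n * sqrt (real n) ^ \<alpha>) ` {2..<N0})"
  define M where "M = Min A"
  have finA: "finite A" "A \<noteq> {}" unfolding A_def by auto
  have Apos: "\<forall>y\<in>A. 0 < y" unfolding A_def using cc_pos rpos by auto
  have Mpos: "0 < M" unfolding M_def using Min_gr_iff[OF finA] Apos by blast
  have Mc: "M \<le> cc \<alpha>" unfolding M_def using finA by (simp add: A_def)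
  have Mr: "M \<le> r n * sqrt (real n) ^ \<alpha>" if "n \<in> {2..<N0}" for n
    unfolding M_def using finA that by (intro Min_le) (auto simp: A_def)
  show ?thesis
  proof (intro exI[of _ M] conjI allI impI Mpos)
    fix n :: nat assume n2: "2 \<le> n"
    then have n1: "1 \<le> n" by simp
    have sp: "0 < sqrt (real n) ^ \<alpha>" using n1 by simp
    have "M / sqrt (real n) ^ \<alpha> \<le> r n"
    proof (cases "N0 \<le> n")
      case True
      have "M / sqrt (real n) ^ \<alpha> \<le> cc \<alpha> / sqrt (real n) ^ \<alpha>"
        using Mc sp by (intro divide_right_mono) auto
      also have "\<dots> \<le> r n" unfolding r_def by (rule big_bound[OF n1 bigN[OF True]])
      finally show ?thesis .
    next
      case False
      then have "n \<in> {2..<N0}" using n2 by simp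
      then have "M / sqrt (real n) ^ \<alpha> \<le> r n * sqrt (real n) ^ \<alpha> / sqrt (real n) ^ \<alpha>"
        using Mr sp by (intro divide_right_mono) auto
      also have "\<dots> = r n" using sp by (intro nonzero_mult_div_cancel_right) linarith
      finally show ?thesis .
    qed
    then have "ereal (M * real n powr (- real \<alpha> / 2)) \<le> ereal (r n)"
      using powr_eq[OF n1, of \<alpha>] by simp
    also have "\<dots> \<le> worst_case_error \<alpha> (gauss_hermite n)" unfolding r_def by (rule wce_ge)
    finally show "ereal (M * real n powr (- real \<alpha> / 2)) \<le> worst_case_error \<alpha> (gauss_hermite n)" .
  qed
qed

end
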